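(* The set of N-small rational functions in $\alpha_1,\ldots,\alpha_r$ is closed under addition and multiplication.
   Context: For $f\in \mathbb{Z}[\alpha_1^{\pm 1},\ldots,\alpha_r^{\pm 1}]$ the Newton polytope $\mathcal N(f)\subset\mathbb{R}^r$ is the convex hull of the exponent vectors of the monomials of $f$ with nonzero coefficient. A rational function $h$ (an element of the fraction field of $\mathbb{Z}[\alpha_1^{\pm 1},\ldots,\alpha_r^{\pm 1}]$) written as $h=f_1/f_2$ with $f_1,f_2$ Laurent polynomials is called N-small if $\mathcal N(f_1)\subset\mathcal N(f_2)$; this does not depend on the chosen presentation. *)

theory Defs
  imports "HOL-Analysis.Analysis" "HOL-Library.Poly_Mapping" "HOL-Computational_Algebra.Fraction_Field"
begin

text \<open>Variables alpha_i are indexed by a finite (linearly ordered) type 'n, so r = CARD('n).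
  A Laurent monomial exponent is a finitely supported map 'n \<Rightarrow> int; a Laurent polynomial
  with integer coefficients is a finitely supported map from exponents to int, with
  convolution product (this is Z[alpha_1^{+-1},...,alpha_r^{+-1}]).\<close>

type_synonym 'n laurent = "('n \<Rightarrow>\<^sub>0 int) \<Rightarrow>\<^sub>0 int"

definition exp_vec :: "('n::finite \<Rightarrow>\<^sub>0 int) \<Rightarrow> real ^ 'n" where
  "exp_vec e = (\<chi> i. real_of_int (Poly_Mapping.lookup e i))"

definition newton :: "('n::finite) laurent \<Rightarrow> (real ^ 'n) set" where
  "newton f = convex hull (exp_vec ` Poly_Mapping.keys f)"

definition N_small :: "('n::{finite,linorder}) laurent fract \<Rightarrow> bool" where
  "N_small h \<longleftrightarrow> (\<exists>f1 f2. f2 \<noteq> 0 \<and> h = Fract f1 f2 \<and> newton f1 \<subseteq> newton f2)"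

end

theory Submission
  imports Defs
begin

abbreviation (input) keys where "keys \<equiv> Poly_Mapping.keys"
abbreviation (input) lookup where "lookup \<equiv> Poly_Mapping.lookup"
lemmas keys_add = Poly_Mapping.keys_add
lemmas lookup_add = Poly_Mapping.lookup_add
lemmas lookup_minus = Poly_Mapping.lookup_minus
lemmas in_keys_iff = Poly_Mapping.in_keys_iff
lemmas keys_mult = Poly_Mapping.keys_mult
lemmas lookup_mult = Poly_Mapping.lookup_mult

definition ndom :: "('n::finite) laurent \<Rightarrow> 'n laurent \<Rightarrow> bool" where
  "ndom f g \<longleftrightarrow> (\<forall>w. \<forall>e\<in>keys f. \<exists>e'\<in>keys g. w \<bullet> exp_vec e \<le> w \<bullet> exp_vec e')"

lemma exp_vec_add: "exp_vec (a + b) = exp_vec a + exp_vec b"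
  by (simp add: exp_vec_def vec_eq_iff lookup_add)

lemma exp_vec_diff: "exp_vec (a - b) = exp_vec a - exp_vec b"
  by (simp add: exp_vec_def vec_eq_iff lookup_minus)

lemma newton_imp_ndom:
  assumes "newton f \<subseteq> newton g" shows "ndom f g"
  unfolding ndom_def
proof (intro allI ballI, rule ccontr)
  fix w e assume e: "e \<in> keys f" and n: "\<not> (\<exists>e'\<in>keys g. w \<bullet> exp_vec e \<le> w \<bullet> exp_vec e')"
  have "exp_vec ` keys g \<subseteq> {x. w \<bullet> x < w \<bullet> exp_vec e}" using n by auto
  hence "newton g \<subseteq> {x. w \<bullet> x < w \<bullet> exp_vec e}"
    unfolding newton_def by (intro hull_minimal convex_halfspace_lt)
  moreover have "exp_vec e \<in> newton f" unfolding newton_def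
    using e by (simp add: hull_inc)
  ultimately show False using assms by auto
qed

lemma ndom_imp_newton:
  assumes "ndom f g" shows "newton f \<subseteq> newton g"
proof -
  have "exp_vec ` keys f \<subseteq> newton g"
  proof (rule ccontr)
    assume "\<not> ?thesis"
    then obtain e where e: "e \<in> keys f" "exp_vec e \<notin> newton g" by auto
    have "compact (newton g)" unfolding newton_def
      by (intro compact_convex_hull finite_imp_compact) simp
    hence "closed (newton g)" by (rule compact_imp_closed)
    moreover have "convex (newton g)" unfolding newton_def by simp
    ultimately obtain a b where ab: "a \<bullet> exp_vec e < b" "\<forall>x\<in>newton g. a \<bullet> x > b"
      using separating_hyperplane_closed_point e(2) by blast
    obtain e' where e': "e' \<in> keys g" "(-a) \<bullet> exp_vec e \<le> (-a) \<bullet> exp_vec e'"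
      using assms e(1) unfolding ndom_def by blast
    have "exp_vec e' \<in> newton g" unfolding newton_def using e'(1) by (simp add: hull_inc)
    with ab e'(2) show False by auto
  qed
  thus ?thesis unfolding newton_def by (intro hull_minimal) (simp_all add: newton_def)
qed

lemma ndom_refl: "ndom f f"
  unfolding ndom_def by (meson order_refl)

lemma ndom_add:
  assumes "ndom p r" "ndom q r" shows "ndom (p + q) r"
  unfolding ndom_def
proof (intro allI ballI)
  fix w e assume "e \<in> keys (p + q)"
  hence "e \<in> keys p \<union> keys q" by (rule subsetD[OF keys_add])
  thus "\<exists>e'\<in>keys r. w \<bullet> exp_vec e \<le> w \<bullet> exp_vec e'"
  proof
    assume "e \<in> keys p" thus ?thesis using assms(1) unfolding ndom_def by simp
  next
    assume "e \<in> keys q" thus ?thesis using assms(2) unfolding ndom_def by simp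
  qed
qed

lemma exists_top:
  fixes r :: "('n::{finite,linorder}) laurent" and w :: "real ^ ('n::{finite,linorder})"
  assumes "r \<noteq> 0"
  shows "\<exists>a0\<in>keys r. \<forall>a\<in>keys r. w \<bullet> exp_vec a < w \<bullet> exp_vec a0 \<or>
            (w \<bullet> exp_vec a = w \<bullet> exp_vec a0 \<and> a \<le> a0)"
proof -
  define F where "F = keys r"
  have fin: "finite F" and ne: "F \<noteq> {}" using assms by (auto simp: F_def)
  define M where "M = Max ((\<lambda>a. w \<bullet> exp_vec a) ` F)"
  have M: "\<forall>a\<in>F. w \<bullet> exp_vec a \<le> M" "\<exists>a\<in>F. w \<bullet> exp_vec a = M"
  proof -
    show "\<forall>a\<in>F. w \<bullet> exp_vec a \<le> M" using fin unfolding M_def by auto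
    have "M \<in> (\<lambda>a. w \<bullet> exp_vec a) ` F" unfolding M_def using fin ne by (intro Max_in) auto
    thus "\<exists>a\<in>F. w \<bullet> exp_vec a = M" by auto
  qed
  define H where "H = {a\<in>F. w \<bullet> exp_vec a = M}"
  have fH: "finite H" "H \<noteq> {}" using fin M(2) by (auto simp: H_def)
  define a0 where "a0 = Max H"
  have a0: "a0 \<in> H" "\<forall>a\<in>H. a \<le> a0" using fH unfolding a0_def by auto
  show ?thesis
  proof (intro bexI[of _ a0] ballI)
    show "a0 \<in> keys r" using a0 by (simp add: H_def F_def)
    fix a assume "a \<in> keys r"
    hence aF: "a \<in> F" by (simp add: F_def)
    have wa0: "w \<bullet> exp_vec a0 = M" using a0(1) by (simp add: H_def)
    show "w \<bullet> exp_vec a < w \<bullet> exp_vec a0 \<or> (w \<bullet> exp_vec a = w \<bullet> exp_vec a0 \<and> a \<le> a0)"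
    proof (cases "w \<bullet> exp_vec a = M")
      case True
      hence "a \<in> H" using aF by (simp add: H_def)
      thus ?thesis using a0(2) True wa0 by simp
    next
      case False
      thus ?thesis using M(1) aF wa0 by (simp add: less_le)
    qed
  qed
qed

lemma ostrowski:
  fixes r s :: "('n::{finite,linorder}) laurent" and w :: "real ^ ('n::{finite,linorder})"
  assumes a: "a \<in> keys r" and b: "b \<in> keys s"
  shows "\<exists>c\<in>keys (r * s). w \<bullet> exp_vec (a + b) \<le> w \<bullet> exp_vec c"
proof -
  have rn: "r \<noteq> 0" and sn: "s \<noteq> 0" using a b by auto
  obtain a0 where a0: "a0 \<in> keys r" "\<forall>a\<in>keys r. w \<bullet> exp_vec a < w \<bullet> exp_vec a0 \<or>
            (w \<bullet> exp_vec a = w \<bullet> exp_vec a0 \<and> a \<le> a0)"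
    using exists_top[OF rn, of w] by blast
  obtain b0 where b0: "b0 \<in> keys s" "\<forall>b\<in>keys s. w \<bullet> exp_vec b < w \<bullet> exp_vec b0 \<or>
            (w \<bullet> exp_vec b = w \<bullet> exp_vec b0 \<and> b \<le> b0)"
    using exists_top[OF sn, of w] by blast
  define k where "k = a0 + b0"
  have inner: "(\<Sum>q. lookup s q when k = l + q) = lookup s (k - l)" for l
  proof -
    have "(\<lambda>q. lookup s q when k = l + q) = (\<lambda>q. if q = k - l then lookup s q else 0)"
      by (auto simp: fun_eq_iff when_def algebra_simps)
    hence "(\<Sum>q. lookup s q when k = l + q) = (\<Sum>q. if q = k - l then lookup s q else 0)"
      by (rule arg_cong)
    also have "\<dots> = lookup s (k - l)" by (rule Sum_any.delta)
    finally show ?thesis .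
  qed
  have zero: "lookup r l * lookup s (k - l) = 0" if "l \<noteq> a0" for l
  proof (rule ccontr)
    assume "lookup r l * lookup s (k - l) \<noteq> 0"
    hence l: "l \<in> keys r" and kl: "k - l \<in> keys s" by (auto simp: in_keys_iff)
    have eq: "w \<bullet> exp_vec l + w \<bullet> exp_vec (k - l) = w \<bullet> exp_vec a0 + w \<bullet> exp_vec b0"
      by (simp add: k_def exp_vec_diff exp_vec_add inner_diff_right inner_add_right)
    have c1: "w \<bullet> exp_vec l < w \<bullet> exp_vec a0 \<or> (w \<bullet> exp_vec l = w \<bullet> exp_vec a0 \<and> l \<le> a0)"
      using a0(2) l by blast
    have c2: "w \<bullet> exp_vec (k - l) < w \<bullet> exp_vec b0 \<or> (w \<bullet> exp_vec (k - l) = w \<bullet> exp_vec b0 \<and> k - l \<le> b0)"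
      using b0(2) kl by blast
    have "l \<le> a0" "k - l \<le> b0" using c1 c2 eq by linarith+
    with that have "l + (k - l) < a0 + b0"
      using add_less_le_mono by (metis order_le_neq_trans)
    thus False by (simp add: k_def)
  qed
  have "lookup (r * s) k = (\<Sum>l. lookup r l * lookup s (k - l))"
    by (simp add: lookup_mult inner)
  also have "\<dots> = (\<Sum>l. if l = a0 then lookup r l * lookup s (k - l) else 0)"
    using zero by (intro Sum_any.cong) auto
  also have "\<dots> = lookup r a0 * lookup s b0" by (simp add: k_def)
  finally have "k \<in> keys (r * s)" using a0(1) b0(1) by (simp add: in_keys_iff)
  moreover have "w \<bullet> exp_vec (a + b) \<le> w \<bullet> exp_vec k"
  proof -
    have "w \<bullet> exp_vec a \<le> w \<bullet> exp_vec a0" using a0(2) a by force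
    moreover have "w \<bullet> exp_vec b \<le> w \<bullet> exp_vec b0" using b0(2) b by force
    ultimately show ?thesis by (simp add: k_def exp_vec_add inner_add_right)
  qed
  ultimately show ?thesis by blast
qed

lemma ndom_mult:
  fixes p q r s :: "('n::{finite,linorder}) laurent"
  assumes "ndom p r" "ndom q s" shows "ndom (p * q) (r * s)"
  unfolding ndom_def
proof (intro allI ballI)
  fix w e assume "e \<in> keys (p * q)"
  then obtain a b where ab: "e = a + b" "a \<in> keys p" "b \<in> keys q" using keys_mult by blast
  obtain a' where a': "a' \<in> keys r" "w \<bullet> exp_vec a \<le> w \<bullet> exp_vec a'"
    using assms(1) ab unfolding ndom_def by blast
  obtain b' where b': "b' \<in> keys s" "w \<bullet> exp_vec b \<le> w \<bullet> exp_vec b'"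
    using assms(2) ab unfolding ndom_def by blast
  obtain c where c: "c \<in> keys (r * s)" "w \<bullet> exp_vec (a' + b') \<le> w \<bullet> exp_vec c"
    using ostrowski a'(1) b'(1) by blast
  have "w \<bullet> exp_vec e \<le> w \<bullet> exp_vec (a' + b')"
    using a'(2) b'(2) by (simp add: ab exp_vec_add inner_add_right)
  thus "\<exists>e'\<in>keys (r * s). w \<bullet> exp_vec e \<le> w \<bullet> exp_vec e'"
    using c by (meson order_trans)
qed

theorem lemma3p5:
  fixes h g :: "('n::{finite,linorder}) laurent fract"
  assumes "N_small h" and "N_small g"
  shows "N_small (h + g) \<and> N_small (h * g)"
proof -
  obtain f1 f2 where h: "f2 \<noteq> 0" "h = Fract f1 f2" "ndom f1 f2"
    using assms(1) newton_imp_ndom unfolding N_small_def by blast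
  obtain g1 g2 where g: "g2 \<noteq> 0" "g = Fract g1 g2" "ndom g1 g2"
    using assms(2) newton_imp_ndom unfolding N_small_def by blast
  have "ndom (f1 * g2 + g1 * f2) (f2 * g2)"
  proof (rule ndom_add)
    show "ndom (f1 * g2) (f2 * g2)" using h g ndom_refl by (intro ndom_mult)
    have "ndom (g1 * f2) (g2 * f2)" using h g ndom_refl by (intro ndom_mult)
    thus "ndom (g1 * f2) (f2 * g2)" by (simp add: mult.commute)
  qed
  hence "N_small (h + g)" unfolding N_small_def using h g
    by (intro exI[of _ "f1 * g2 + g1 * f2"] exI[of _ "f2 * g2"]) (simp add: ndom_imp_newton)
  moreover have "ndom (f1 * g1) (f2 * g2)" using h g by (intro ndom_mult)
  hence "N_small (h * g)" unfolding N_small_def using h g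
    by (intro exI[of _ "f1 * g1"] exI[of _ "f2 * g2"]) (simp add: ndom_imp_newton)
  ultimately show ?thesis ..
qed

end
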